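(* Let $\mathcal{X}=\langle P,K,V\rangle$ be a polyhedral model. Every simplicial bisimulation $\sim\subseteq P\times P$ is included in logical equivalence: if $x\sim y$ then for every SLCS formula $\phi$, $\mathcal{X},x\models\phi\iff\mathcal{X},y\models\phi$.
   Context: A $d$-simplex $\sigma\subseteq\mathbb{R}^m$ is the convex hull of $d+1$ affinely independent points $v_0,\dots,v_d$ (its vertices); the simplexes spanned by subsets of the vertices (including the empty simplex) are its faces, and $\tau\preceq\sigma$ means $\tau$ is a face of $\sigma$. The relative interior of $\sigma$ is $\tilde\sigma=\{\sum_i\lambda_iv_i:\lambda_i\in(0,1],\sum_i\lambda_i=1\}$. A simplicial complex $K$ is a finite set of simplexes of $\mathbb{R}^m$ closed under taking faces and such that the intersection of any two of its simplexes is a face of both. Its polyhedron is $|K|=\bigcup K$, with the subspace topology of $\mathbb{R}^m$; $\mathcal{C}$ and $\mathcal{I}$ denote closure and interior in this space. The cells of $K$ are the sets $\tilde\sigma$ for nonempty $\sigma\in K$; they form a partition $\tilde K$ of $|K|$. A path in a space $P$ is a continuous $\pi:[0,1]\to P$; $\pi(S)=\{\pi(s):s\in S\}$. Fix a finite set $AP$ of atomic propositions. A polyhedral model is $\mathcal{X}=\langle P,K,V\rangle$ with $K$ a simplicial complex, $P=|K|$, and $V:AP\to\mathcal{P}(P)$ such that each $V(p)$ is a union of cells of $K$ ($K$ is then called coherent with the model). SLCS formulas: $\phi::=\top\mid p\mid\neg\phi\mid\phi\wedge\phi\mid\Box\phi\mid\gamma(\phi,\phi)$, $p\in AP$. Semantics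 at $x\in P$, with $[\![\phi]\!]=\{x\in P:\mathcal{X},x\models\phi\}$: $\top$ always holds; $x\models p$ iff $x\in V(p)$; Boolean connectives as usual; $x\models\Box\phi$ iff $x\in\mathcal{I}([\![\phi]\!])$; $x\models\gamma(\phi,\psi)$ iff there is a path $\pi$ in $P$ with $\pi(0)=x$, $\pi((0,1))\subseteq[\![\phi]\!]$ and $\pi(1)\in[\![\psi]\!]$. A path $\pi$ is simplicial (w.r.t. $K$) if there are $s_0=0<s_1<\dots<s_k=1$ and cells $\tilde\sigma_1,\dots,\tilde\sigma_k$ of $K$ with $\pi((s_{i-1},s_i))\subseteq\tilde\sigma_i$ for all $i$. For $R\subseteq P\times P$, paths satisfy $\pi_1\hat R\pi_2$ iff $\pi_1(t)\,R\,\pi_2(t)$ for all $t\in[0,1]$. A relation $\sim\subseteq P\times P$ is a simplicial bisimulation if whenever $x\sim y$: (1) for all $p\in AP$, $x\in V(p)\iff y\in V(p)$; (2) for every simplicial path $\pi_x$ with $\pi_x(0)=x$ there is a simplicial path $\pi_y$ with $\pi_y(0)=y$ and $\pi_x\hat\sim\pi_y$; (3) for every simplicial path $\pi_y$ with $\pi_y(0)=y$ there is a simplicial path $\pi_x$ with $\pi_x(0)=x$ and $\pi_x\hat\sim\pi_y$. *)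

theory Defs
  imports "HOL-Analysis.Analysis"
begin

definition is_simplex :: "'a::euclidean_space set \<Rightarrow> bool" where
  "is_simplex \<sigma> \<longleftrightarrow> (\<exists>V. finite V \<and> \<not> affine_dependent V \<and> \<sigma> = convex hull V)"

definition face_of_simplex :: "'a::euclidean_space set \<Rightarrow> 'a set \<Rightarrow> bool" where
  "face_of_simplex \<tau> \<sigma> \<longleftrightarrow>
     (\<exists>V W. finite V \<and> \<not> affine_dependent V \<and> \<sigma> = convex hull V \<and> W \<subseteq> V \<and> \<tau> = convex hull W)"

text \<open>Relative interior of a simplex, as in the paper:
  combinations with all coefficients in (0,1] summing to 1.\<close>
definition cell :: "'a::euclidean_space set \<Rightarrow> 'a set" where
  "cell \<sigma> = {x. \<exists>V l. finite V \<and> \<not> affine_dependent V \<and> \<sigma> = convex hull V \<and>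
       (\<forall>v\<in>V. 0 < l v \<and> l v \<le> 1) \<and> sum l V = 1 \<and> x = (\<Sum>v\<in>V. l v *\<^sub>R v)}"

definition simplicial_complex :: "'a::euclidean_space set set \<Rightarrow> bool" where
  "simplicial_complex K \<longleftrightarrow>
     finite K \<and> (\<forall>\<sigma>\<in>K. is_simplex \<sigma>) \<and>
     (\<forall>\<sigma>\<in>K. \<forall>\<tau>. face_of_simplex \<tau> \<sigma> \<longrightarrow> \<tau> \<in> K) \<and>
     (\<forall>\<sigma>\<in>K. \<forall>\<tau>\<in>K. face_of_simplex (\<sigma> \<inter> \<tau>) \<sigma> \<and> face_of_simplex (\<sigma> \<inter> \<tau>) \<tau>)"

definition polyhedron :: "'a::euclidean_space set set \<Rightarrow> 'a set" where
  "polyhedron K = \<Union>K"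

definition polyhedral_model :: "'a::euclidean_space set set \<Rightarrow> ('p \<Rightarrow> 'a set) \<Rightarrow> bool" where
  "polyhedral_model K Val \<longleftrightarrow> simplicial_complex K \<and>
     (\<forall>p. \<exists>S\<subseteq>{\<sigma>\<in>K. \<sigma> \<noteq> {}}. Val p = \<Union>(cell ` S))"

datatype 'p slcs = Top | Atom 'p | Not "'p slcs" | And "'p slcs" "'p slcs"
  | Box "'p slcs" | Gamma "'p slcs" "'p slcs"

definition path_in :: "'a::euclidean_space set \<Rightarrow> (real \<Rightarrow> 'a) \<Rightarrow> bool" where
  "path_in P \<pi> \<longleftrightarrow> path \<pi> \<and> path_image \<pi> \<subseteq> P"

primrec sem :: "'a::euclidean_space set set \<Rightarrow> ('p \<Rightarrow> 'a set) \<Rightarrow> 'p slcs \<Rightarrow> 'a set" where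
  "sem K Val Top = polyhedron K"
| "sem K Val (Atom p) = polyhedron K \<inter> Val p"
| "sem K Val (Not \<phi>) = polyhedron K - sem K Val \<phi>"
| "sem K Val (And \<phi> \<psi>) = sem K Val \<phi> \<inter> sem K Val \<psi>"
| "sem K Val (Box \<phi>) = (subtopology euclidean (polyhedron K)) interior_of (sem K Val \<phi>)"
| "sem K Val (Gamma \<phi> \<psi>) = {x \<in> polyhedron K. \<exists>\<pi>. path_in (polyhedron K) \<pi> \<and> \<pi> 0 = x \<and>
       \<pi> ` {0<..<1} \<subseteq> sem K Val \<phi> \<and> \<pi> 1 \<in> sem K Val \<psi>}"

definition models :: "'a::euclidean_space set set \<Rightarrow> ('p \<Rightarrow> 'a set) \<Rightarrow> 'a \<Rightarrow> 'p slcs \<Rightarrow> bool" where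
  "models K Val x \<phi> \<longleftrightarrow> x \<in> sem K Val \<phi>"

definition simplicial_path :: "'a::euclidean_space set set \<Rightarrow> (real \<Rightarrow> 'a) \<Rightarrow> bool" where
  "simplicial_path K \<pi> \<longleftrightarrow> path_in (polyhedron K) \<pi> \<and>
     (\<exists>s::nat \<Rightarrow> real. \<exists>k. s 0 = 0 \<and> s k = 1 \<and> (\<forall>i<k. s i < s (Suc i)) \<and>
        (\<forall>i<k. \<exists>\<sigma>\<in>K. \<sigma> \<noteq> {} \<and> \<pi> ` {s i<..<s (Suc i)} \<subseteq> cell \<sigma>))"

definition path_rel :: "('a \<times> 'a) set \<Rightarrow> (real \<Rightarrow> 'a) \<Rightarrow> (real \<Rightarrow> 'a) \<Rightarrow> bool" where
  "path_rel R \<pi>1 \<pi>2 \<longleftrightarrow> (\<forall>t\<in>{0..1}. (\<pi>1 t, \<pi>2 t) \<in> R)"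

definition simplicial_bisimulation ::
  "'a::euclidean_space set set \<Rightarrow> ('p \<Rightarrow> 'a set) \<Rightarrow> ('a \<times> 'a) set \<Rightarrow> bool" where
  "simplicial_bisimulation K Val R \<longleftrightarrow>
     R \<subseteq> polyhedron K \<times> polyhedron K \<and>
     (\<forall>(x, y)\<in>R.
        (\<forall>p. x \<in> Val p \<longleftrightarrow> y \<in> Val p) \<and>
        (\<forall>\<pi>x. simplicial_path K \<pi>x \<and> \<pi>x 0 = x \<longrightarrow>
           (\<exists>\<pi>y. simplicial_path K \<pi>y \<and> \<pi>y 0 = y \<and> path_rel R \<pi>x \<pi>y)) \<and>
        (\<forall>\<pi>y. simplicial_path K \<pi>y \<and> \<pi>y 0 = y \<longrightarrow>
           (\<exists>\<pi>x. simplicial_path K \<pi>x \<and> \<pi>x 0 = x \<and> path_rel R \<pi>x \<pi>y)))"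

end

theory Submission
  imports Defs
begin

lemma simplex_convex: "is_simplex \<sigma> \<Longrightarrow> convex \<sigma>"
  unfolding is_simplex_def by (auto simp: convex_convex_hull)

lemma simplex_compact: "is_simplex \<sigma> \<Longrightarrow> compact \<sigma>"
  unfolding is_simplex_def by (auto intro: finite_imp_compact_convex_hull)

lemma cell_eq: "is_simplex \<sigma> \<Longrightarrow> cell \<sigma> = rel_interior \<sigma>"
proof
  assume "is_simplex \<sigma>"
  then obtain V where V: "finite V" "\<not> affine_dependent V" "\<sigma> = convex hull V"
    unfolding is_simplex_def by blast
  show "cell \<sigma> \<subseteq> rel_interior \<sigma>"
  proof
    fix x assume "x \<in> cell \<sigma>"
    then obtain V' l where "finite V'" "\<not> affine_dependent V'" "\<sigma> = convex hull V'"
      "\<forall>v\<in>V'. 0 < l v \<and> l v \<le> 1" "sum l V' = 1" "x = (\<Sum>v\<in>V'. l v *\<^sub>R v)"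
      unfolding cell_def by blast
    then show "x \<in> rel_interior \<sigma>"
      by (auto simp: rel_interior_convex_hull_explicit)
  qed
  show "rel_interior \<sigma> \<subseteq> cell \<sigma>"
  proof
    fix x assume "x \<in> rel_interior \<sigma>"
    then obtain u where u: "\<forall>v\<in>V. 0 < u v" "sum u V = 1" "x = (\<Sum>v\<in>V. u v *\<^sub>R v)"
      using V by (auto simp: rel_interior_convex_hull_explicit)
    have "\<forall>v\<in>V. u v \<le> 1"
    proof
      fix v assume "v \<in> V"
      then have "u v \<le> sum u V"
        by (rule member_le_sum) (use u V in auto)
      then show "u v \<le> 1" using u by simp
    qed
    then show "x \<in> cell \<sigma>" unfolding cell_def using V u by blast
  qed
qed

lemma sc_simplex: "simplicial_complex K \<Longrightarrow> \<sigma> \<in> K \<Longrightarrow> is_simplex \<sigma>"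
  unfolding simplicial_complex_def by blast

lemma face_imp_face_of: "face_of_simplex \<tau> \<sigma> \<Longrightarrow> \<tau> face_of \<sigma>"
proof -
  assume "face_of_simplex \<tau> \<sigma>"
  then obtain V W where "\<not> affine_dependent V" "\<sigma> = convex hull V" "W \<subseteq> V" "\<tau> = convex hull W"
    unfolding face_of_simplex_def by blast
  then show ?thesis using face_of_convex_hull_affine_independent by blast
qed

lemma star_subset:
  assumes K: "simplicial_complex K" and "\<sigma> \<in> K" "\<tau> \<in> K" "x \<in> rel_interior \<sigma>" "x \<in> \<tau>"
  shows "\<sigma> \<subseteq> \<tau>"
proof -
  have "face_of_simplex (\<sigma> \<inter> \<tau>) \<sigma>" using K assms unfolding simplicial_complex_def by blast
  then have f: "(\<sigma> \<inter> \<tau>) face_of \<sigma>" by (rule face_imp_face_of)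
  have "x \<in> \<sigma>" using assms rel_interior_subset by blast
  then have "\<sigma> \<subseteq> \<sigma> \<inter> \<tau>"
    by (intro subset_of_face_of[OF f]) (use assms in auto)
  then show ?thesis by blast
qed

lemma cells_disjoint:
  assumes K: "simplicial_complex K" and "\<sigma> \<in> K" "\<tau> \<in> K" "x \<in> rel_interior \<sigma>" "x \<in> rel_interior \<tau>"
  shows "\<sigma> = \<tau>"
  using star_subset[OF K assms(2,3,4)] star_subset[OF K assms(3,2,5)] assms rel_interior_subset
  by blast

lemma cover:
  assumes K: "simplicial_complex K" and z: "z \<in> polyhedron K"
  shows "\<exists>\<tau>\<in>K. z \<in> rel_interior \<tau>"
proof -
  obtain \<sigma> where s: "\<sigma> \<in> K" "z \<in> \<sigma>" using z unfolding polyhedron_def by blast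
  then obtain V where V: "finite V" "\<not> affine_dependent V" "\<sigma> = convex hull V"
    using K unfolding simplicial_complex_def is_simplex_def by blast
  obtain u where u: "\<forall>v\<in>V. 0 \<le> u v" "sum u V = 1" "(\<Sum>v\<in>V. u v *\<^sub>R v) = z"
    using s V by (auto simp: convex_hull_finite)
  define W where "W = {v\<in>V. 0 < u v}"
  have W1: "W \<subseteq> V" unfolding W_def by auto
  have W: "W \<subseteq> V" "finite W" "\<not> affine_dependent W"
    using V W1 affine_independent_subset finite_subset by auto
  have sW: "sum u W = 1"
  proof -
    have "sum u V = sum u W" unfolding W_def
      by (rule sum.mono_neutral_right) (use V u in auto)
    then show ?thesis using u by simp
  qed
  have zW: "(\<Sum>v\<in>W. u v *\<^sub>R v) = z"
  proof -
    have "(\<Sum>v\<in>V. u v *\<^sub>R v) = (\<Sum>v\<in>W. u v *\<^sub>R v)" unfolding W_def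
      by (rule sum.mono_neutral_right) (use V u in auto)
    then show ?thesis using u by simp
  qed
  have "face_of_simplex (convex hull W) \<sigma>"
    unfolding face_of_simplex_def using V W by blast
  then have inK: "convex hull W \<in> K" using K s unfolding simplicial_complex_def by blast
  have pos: "\<forall>v\<in>W. 0 < u v" by (simp add: W_def)
  have "z \<in> rel_interior (convex hull W)"
    unfolding rel_interior_convex_hull_explicit[OF W(3)] using pos sW zW by blast
  then show ?thesis using inK by blast
qed

lemma local_star:
  assumes K: "simplicial_complex K"
  shows "\<exists>e>0. \<forall>z. dist z x < e \<longrightarrow> (\<forall>\<tau>\<in>K. z \<in> \<tau> \<longrightarrow> x \<in> \<tau>)"
proof -
  let ?C = "\<Union>{\<tau>\<in>K. x \<notin> \<tau>}"
  have "closed ?C"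
    using K by (intro closed_Union) (auto simp: simplicial_complex_def intro: compact_imp_closed simplex_compact)
  moreover have "x \<notin> ?C" by blast
  ultimately obtain e where "e > 0" "ball x e \<inter> ?C = {}"
  proof -
    have "open (- ?C)" using \<open>closed ?C\<close> by (simp add: open_Compl)
    then obtain e where "e > 0" "ball x e \<subseteq> - ?C" using \<open>x \<notin> ?C\<close>
      by (meson ComplI open_contains_ball_eq)
    then show ?thesis using that by blast
  qed
  show ?thesis
  proof (intro exI[of _ e] conjI allI impI ballI)
    show "e > 0" by fact
    fix z \<tau> assume z: "dist z x < e" "\<tau> \<in> K" "z \<in> \<tau>"
    show "x \<in> \<tau>"
    proof (rule ccontr)
      assume "x \<notin> \<tau>"
      then have "z \<in> ?C" using z by blast
      moreover have "z \<in> ball x e" using z by (simp add: dist_commute)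
      ultimately show False using \<open>ball x e \<inter> ?C = {}\<close> by blast
    qed
  qed
qed

lemma seg_in1:
  assumes "is_simplex \<tau>" "a \<in> \<tau>" "b \<in> rel_interior \<tau>" "0 < t" "t \<le> 1"
  shows "linepath a b t \<in> rel_interior \<tau>"
proof -
  have "a - t *\<^sub>R (a - b) \<in> rel_interior \<tau>"
    using assms simplex_convex closure_subset by (intro rel_interior_closure_convex_shrink) auto
  moreover have "a - t *\<^sub>R (a - b) = linepath a b t" by (simp add: linepath_def algebra_simps)
  ultimately show ?thesis by simp
qed

lemma seg_in2:
  assumes "is_simplex \<tau>" "a \<in> \<tau>" "b \<in> rel_interior \<tau>" "0 \<le> t" "t < 1"
  shows "linepath b a t \<in> rel_interior \<tau>"
proof -
  have "a - (1 - t) *\<^sub>R (a - b) \<in> rel_interior \<tau>"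
    using assms simplex_convex closure_subset by (intro rel_interior_closure_convex_shrink) auto
  moreover have "a - (1 - t) *\<^sub>R (a - b) = linepath b a t" by (simp add: linepath_def algebra_simps)
  ultimately show ?thesis by simp
qed

lemma simp_seg:
  assumes K: "simplicial_complex K" and "\<tau> \<in> K" "a \<in> \<tau>" "b \<in> \<tau>"
    and ins: "\<forall>t\<in>{0<..<1}. linepath a b t \<in> rel_interior \<tau>"
  shows "simplicial_path K (linepath a b)"
  unfolding simplicial_path_def
proof (intro conjI)
  have cv: "convex \<tau>" using assms sc_simplex simplex_convex by blast
  have "path_image (linepath a b) \<subseteq> \<tau>"
    using cv assms by (simp add: closed_segment_subset)
  also have "\<tau> \<subseteq> polyhedron K" using assms unfolding polyhedron_def by blast
  finally show "path_in (polyhedron K) (linepath a b)" unfolding path_in_def by simp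
  have ce: "cell \<tau> = rel_interior \<tau>" using assms sc_simplex cell_eq by blast
  show "\<exists>s k. s 0 = 0 \<and> s k = 1 \<and> (\<forall>i<k. s i < s (Suc i)) \<and>
     (\<forall>i<k. \<exists>\<sigma>\<in>K. \<sigma> \<noteq> {} \<and> linepath a b ` {s i<..<s (Suc i)} \<subseteq> cell \<sigma>)"
    apply (rule exI[of _ "\<lambda>i. if i = 0 then 0 else 1"], rule exI[of _ 1])
    using assms ce by auto
qed

lemma mono_s: "(\<forall>i<k. s i < (s (Suc i) :: real)) \<Longrightarrow> i \<le> j \<Longrightarrow> j \<le> k \<Longrightarrow> s i \<le> s j"
proof (induction j)
  case 0 then show ?case by simp
next
  case (Suc j)
  show ?case
  proof (cases "i = Suc j")
    case False
    then have "s i \<le> s j" using Suc by auto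
    also have "s j < s (Suc j)" using Suc by auto
    finally show ?thesis by simp
  qed simp
qed

lemma simp_join:
  assumes p1: "simplicial_path K \<rho>1" and p2: "simplicial_path K \<rho>2" and e: "\<rho>1 1 = \<rho>2 0"
  shows "simplicial_path K (\<rho>1 +++ \<rho>2)"
proof -
  obtain s1 k1 where S1: "s1 0 = 0" "s1 k1 = 1" "\<forall>i<k1. s1 i < s1 (Suc i)"
    "\<forall>i<k1. \<exists>\<sigma>\<in>K. \<sigma> \<noteq> {} \<and> \<rho>1 ` {s1 i<..<s1 (Suc i)} \<subseteq> cell \<sigma>"
    and P1: "path_in (polyhedron K) \<rho>1"
    using p1 unfolding simplicial_path_def by blast
  obtain s2 k2 where S2: "s2 0 = 0" "s2 k2 = 1" "\<forall>i<k2. s2 i < s2 (Suc i)"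
    "\<forall>i<k2. \<exists>\<sigma>\<in>K. \<sigma> \<noteq> {} \<and> \<rho>2 ` {s2 i<..<s2 (Suc i)} \<subseteq> cell \<sigma>"
    and P2: "path_in (polyhedron K) \<rho>2"
    using p2 unfolding simplicial_path_def by blast
  have k2: "k2 > 0" using S2 by (cases k2) auto
  have pj: "path_in (polyhedron K) (\<rho>1 +++ \<rho>2)"
    using P1 P2 e path_image_join_subset[of \<rho>1 \<rho>2] unfolding path_in_def
    by (auto simp: pathfinish_def pathstart_def intro!: path_join_imp)
  define s where "s i = (if i \<le> k1 then s1 i / 2 else (s2 (i - k1) + 1) / 2)" for i
  have sge: "s i = (s2 (i - k1) + 1) / 2" if "k1 \<le> i" for i
    using that S1 S2 unfolding s_def by auto
  have s1le: "s1 i \<le> 1" if "i \<le> k1" for i using mono_s[OF S1(3) that order_refl] S1 by simp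
  have s2ge: "0 \<le> s2 i" if "i \<le> k2" for i using mono_s[OF S2(3), of 0 i] that S2 by simp
  have A: "s 0 = 0" using S1 unfolding s_def by simp
  have B: "s (k1 + k2) = 1" using sge[of "k1+k2"] S2 by simp
  have C: "\<forall>i<k1+k2. s i < s (Suc i)"
  proof (intro allI impI)
    fix i assume i: "i < k1 + k2"
    show "s i < s (Suc i)"
    proof (cases "i < k1")
      case True then show ?thesis using S1 unfolding s_def by auto
    next
      case False
      then have "Suc i - k1 = Suc (i - k1)" "i - k1 < k2" using i by auto
      then show ?thesis using sge[of i] sge[of "Suc i"] False S2 by auto
    qed
  qed
  have D: "\<forall>i<k1+k2. \<exists>\<sigma>\<in>K. \<sigma> \<noteq> {} \<and> (\<rho>1 +++ \<rho>2) ` {s i<..<s (Suc i)} \<subseteq> cell \<sigma>"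
  proof (intro allI impI)
    fix i assume i: "i < k1 + k2"
    show "\<exists>\<sigma>\<in>K. \<sigma> \<noteq> {} \<and> (\<rho>1 +++ \<rho>2) ` {s i<..<s (Suc i)} \<subseteq> cell \<sigma>"
    proof (cases "i < k1")
      case True
      then obtain \<sigma> where \<sigma>: "\<sigma> \<in> K" "\<sigma> \<noteq> {}" "\<rho>1 ` {s1 i<..<s1 (Suc i)} \<subseteq> cell \<sigma>"
        using S1 by blast
      have "(\<rho>1 +++ \<rho>2) t \<in> cell \<sigma>" if t: "t \<in> {s i<..<s (Suc i)}" for t
      proof -
        have "s1 (Suc i) \<le> 1" using s1le True by simp
        then have "t \<le> 1/2" "2 * t \<in> {s1 i<..<s1 (Suc i)}"
          using t True unfolding s_def by auto
        then have "(\<rho>1 +++ \<rho>2) t = \<rho>1 (2 * t)" "\<rho>1 (2 * t) \<in> cell \<sigma>"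
          using \<sigma>(3) by (auto simp: joinpaths_def)
        then show ?thesis by simp
      qed
      then show ?thesis using \<sigma> by blast
    next
      case False
      define j where "j = i - k1"
      have j: "j < k2" "i = k1 + j" "Suc i - k1 = Suc j" using i False unfolding j_def by auto
      then obtain \<sigma> where \<sigma>: "\<sigma> \<in> K" "\<sigma> \<noteq> {}" "\<rho>2 ` {s2 j<..<s2 (Suc j)} \<subseteq> cell \<sigma>"
        using S2 by blast
      have "(\<rho>1 +++ \<rho>2) t \<in> cell \<sigma>" if t: "t \<in> {s i<..<s (Suc i)}" for t
      proof -
        have "0 \<le> s2 j" using s2ge j by simp
        moreover have "s i = (s2 j + 1)/2" "s (Suc i) = (s2 (Suc j) + 1)/2"
          using sge[of i] sge[of "Suc i"] j False by auto
        ultimately have "\<not> t \<le> 1/2" "2 * t - 1 \<in> {s2 j<..<s2 (Suc j)}"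
          using t by auto
        then have "(\<rho>1 +++ \<rho>2) t = \<rho>2 (2 * t - 1)" "\<rho>2 (2 * t - 1) \<in> cell \<sigma>"
          using \<sigma>(3) by (auto simp: joinpaths_def)
        then show ?thesis by simp
      qed
      then show ?thesis using \<sigma> by blast
    qed
  qed
  show ?thesis unfolding simplicial_path_def using pj A B C D by blast
qed

lemma join_image:
  "(\<rho>1 +++ \<rho>2) ` {0<..<1} \<subseteq> \<rho>1 ` {0<..<1} \<union> {\<rho>1 1} \<union> \<rho>2 ` {0<..<1}"
proof
  fix y assume "y \<in> (\<rho>1 +++ \<rho>2) ` {0<..<1}"
  then obtain t where t: "0 < t" "t < 1" "y = (\<rho>1 +++ \<rho>2) t" by auto
  consider "t < 1/2" | "t = 1/2" | "t > 1/2" by linarith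
  then show "y \<in> \<rho>1 ` {0<..<1} \<union> {\<rho>1 1} \<union> \<rho>2 ` {0<..<1}"
  proof cases
    case 1 then have "y = \<rho>1 (2*t)" "2*t \<in> {0<..<1}" using t by (auto simp: joinpaths_def)
    then show ?thesis by blast
  next
    case 2
    have "y = \<rho>1 (2*t)" using 2 t by (simp add: joinpaths_def)
    moreover have "2*t = 1" using 2 by simp
    ultimately have "y = \<rho>1 1" by metis
    then show ?thesis by blast
  next
    case 3 then have "y = \<rho>2 (2*t - 1)" "2*t - 1 \<in> {0<..<1}" using t by (auto simp: joinpaths_def)
    then show ?thesis by blast
  qed
qed

definition cellular :: "'a::euclidean_space set set \<Rightarrow> 'a set \<Rightarrow> bool" where
  "cellular K A \<longleftrightarrow> (\<forall>\<sigma>\<in>K. \<forall>a\<in>rel_interior \<sigma>. \<forall>b\<in>rel_interior \<sigma>. a \<in> A \<longrightarrow> b \<in> A)"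

definition reach :: "'a::euclidean_space set set \<Rightarrow> 'a set \<Rightarrow> 'a \<Rightarrow> 'a \<Rightarrow> bool" where
  "reach K A x q \<longleftrightarrow> (\<exists>\<rho>. simplicial_path K \<rho> \<and> \<rho> 0 = x \<and> \<rho> 1 = q \<and> \<rho> ` {0<..<1} \<subseteq> A)"

lemma nbhd:
  assumes K: "simplicial_complex K" and p: "path \<pi>" "path_image \<pi> \<subseteq> polyhedron K"
    and t: "t \<in> {0..1}"
  shows "\<exists>d>0. \<forall>u\<in>{0..1}. dist u t < d \<longrightarrow> (\<exists>\<tau>\<in>K. \<pi> u \<in> rel_interior \<tau> \<and> \<pi> t \<in> \<tau>)"
proof -
  obtain e where e: "e > 0" "\<forall>z. dist z (\<pi> t) < e \<longrightarrow> (\<forall>\<tau>\<in>K. z \<in> \<tau> \<longrightarrow> \<pi> t \<in> \<tau>)"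
    using local_star[OF K] by blast
  have "continuous_on {0..1} \<pi>" using p unfolding path_def by simp
  then obtain d where d: "d > 0" "\<forall>u\<in>{0..1}. dist u t < d \<longrightarrow> dist (\<pi> u) (\<pi> t) < e"
  proof -
    have "\<forall>x\<in>{0..1}. \<forall>e>0. \<exists>d>0. \<forall>x'\<in>{0..1}. dist x' x < d \<longrightarrow> dist (\<pi> x') (\<pi> x) < e"
      using \<open>continuous_on {0..1} \<pi>\<close> unfolding continuous_on_iff .
    then have "\<exists>d>0. \<forall>x'\<in>{0..1}. dist x' t < d \<longrightarrow> dist (\<pi> x') (\<pi> t) < e"
      using t e(1) by simp
    then show ?thesis using that by blast
  qed
  show ?thesis
  proof (intro exI[of _ d] conjI ballI impI)
    show "d > 0" by fact
    fix u assume u: "u \<in> {0..1}" "dist u t < d"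
    then have "\<pi> u \<in> polyhedron K" using p unfolding path_image_def by blast
    then obtain \<tau> where "\<tau> \<in> K" "\<pi> u \<in> rel_interior \<tau>" using cover[OF K] by blast
    moreover have "\<pi> u \<in> \<tau>" using calculation rel_interior_subset by blast
    moreover have "dist (\<pi> u) (\<pi> t) < e" using d u by simp
    ultimately have "\<pi> t \<in> \<tau>" using e(2) by simp
    then show "\<exists>\<tau>\<in>K. \<pi> u \<in> rel_interior \<tau> \<and> \<pi> t \<in> \<tau>" using \<open>\<tau> \<in> K\<close> \<open>\<pi> u \<in> rel_interior \<tau>\<close> by blast
  qed
qed

lemma seg_fwd:
  assumes K: "simplicial_complex K" and "cellular K A" "\<tau> \<in> K" "p \<in> \<tau>" "q \<in> rel_interior \<tau>" "q \<in> A"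
  shows "simplicial_path K (linepath p q) \<and> linepath p q ` {0<..<1} \<subseteq> A"
proof -
  have s: "is_simplex \<tau>" using K assms sc_simplex by blast
  have ins: "\<forall>t\<in>{0<..<1}. linepath p q t \<in> rel_interior \<tau>"
    using seg_in1[OF s assms(4,5)] by auto
  have "q \<in> \<tau>" using assms rel_interior_subset by blast
  then have "simplicial_path K (linepath p q)" using simp_seg[OF K assms(3,4)] ins by blast
  moreover have "linepath p q ` {0<..<1} \<subseteq> A"
  proof (rule image_subsetI)
    fix t :: real assume "t \<in> {0<..<1}"
    then have "linepath p q t \<in> rel_interior \<tau>" using ins by blast
    then show "linepath p q t \<in> A" using assms(2,3,5,6) unfolding cellular_def by blast
  qed
  ultimately show ?thesis by blast
qed

lemma seg_bwd:
  assumes K: "simplicial_complex K" and "cellular K A" "\<tau> \<in> K" "p \<in> \<tau>" "q \<in> rel_interior \<tau>" "q \<in> A"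
  shows "simplicial_path K (linepath q p) \<and> linepath q p ` {0<..<1} \<subseteq> A"
proof -
  have s: "is_simplex \<tau>" using K assms sc_simplex by blast
  have ins: "\<forall>t\<in>{0<..<1}. linepath q p t \<in> rel_interior \<tau>"
    using seg_in2[OF s assms(4,5)] by auto
  have "q \<in> \<tau>" using assms rel_interior_subset by blast
  then have "simplicial_path K (linepath q p)" using simp_seg[OF K assms(3) _ assms(4)] ins by blast
  moreover have "linepath q p ` {0<..<1} \<subseteq> A"
  proof (rule image_subsetI)
    fix t :: real assume "t \<in> {0<..<1}"
    then have "linepath q p t \<in> rel_interior \<tau>" using ins by blast
    then show "linepath q p t \<in> A" using assms(2,3,5,6) unfolding cellular_def by blast
  qed
  ultimately show ?thesis by blast
qed

lemma reach_ext:
  assumes "reach K A x a" "a \<in> A" "simplicial_path K \<sigma>" "\<sigma> 0 = a" "\<sigma> ` {0<..<1} \<subseteq> A"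
  shows "reach K A x (\<sigma> 1)"
proof -
  obtain \<rho> where r: "simplicial_path K \<rho>" "\<rho> 0 = x" "\<rho> 1 = a" "\<rho> ` {0<..<1} \<subseteq> A"
    using assms unfolding reach_def by blast
  have "simplicial_path K (\<rho> +++ \<sigma>)" using simp_join[OF r(1) assms(3)] r(3) assms(4) by simp
  moreover have "(\<rho> +++ \<sigma>) 0 = x" using r(2) by (simp add: joinpaths_def)
  moreover have "(\<rho> +++ \<sigma>) 1 = \<sigma> 1" by (simp add: joinpaths_def)
  moreover have "(\<rho> +++ \<sigma>) ` {0<..<1} \<subseteq> A"
  proof -
    have "\<rho> ` {0<..<1} \<union> {\<rho> 1} \<union> \<sigma> ` {0<..<1} \<subseteq> A" using r(3,4) assms(2,5) by simp
    then show ?thesis using join_image[of \<rho> \<sigma>] by (rule subset_trans[rotated])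
  qed
  ultimately show ?thesis unfolding reach_def by blast
qed

lemma path_to_simplicial:
  assumes K: "simplicial_complex K" and C: "cellular K A" and p: "path \<pi>" "path_image \<pi> \<subseteq> polyhedron K"
    and inA: "\<pi> ` {0<..<1} \<subseteq> A"
  shows "reach K A (\<pi> 0) (\<pi> 1)"
proof -
  define f where "f t = reach K A (\<pi> 0) (\<pi> t)" for t
  have start: "\<exists>u\<in>{0<..<1}. f u"
  proof -
    obtain d where d: "d > 0" "\<forall>u\<in>{0..1}. dist u 0 < d \<longrightarrow> (\<exists>\<tau>\<in>K. \<pi> u \<in> rel_interior \<tau> \<and> \<pi> 0 \<in> \<tau>)"
      using nbhd[OF K p, of 0] by auto
    define u where "u = min (d/2) (1/2)"
    have u: "u \<in> {0<..<1}" "dist u 0 < d" using d unfolding u_def by (auto simp: dist_real_def)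
    then obtain \<tau> where \<tau>: "\<tau> \<in> K" "\<pi> u \<in> rel_interior \<tau>" "\<pi> 0 \<in> \<tau>" using d by auto
    have "\<pi> u \<in> A" using u inA by blast
    then have "simplicial_path K (linepath (\<pi> 0) (\<pi> u)) \<and> linepath (\<pi> 0) (\<pi> u) ` {0<..<1} \<subseteq> A"
      using seg_fwd[OF K C \<tau>(1,3,2)] by blast
    then have "f u" unfolding f_def reach_def by (intro exI[of _ "linepath (\<pi> 0) (\<pi> u)"]) (auto simp: linepath_0' linepath_1')
    then show ?thesis using u by blast
  qed
  have loc: "\<forall>t\<in>{0<..<1}. eventually (\<lambda>u. f t = f u) (at t within {0<..<1})"
  proof
    fix t :: real assume t: "t \<in> {0<..<1}"
    obtain d where d: "d > 0" "\<forall>u\<in>{0..1}. dist u t < d \<longrightarrow> (\<exists>\<tau>\<in>K. \<pi> u \<in> rel_interior \<tau> \<and> \<pi> t \<in> \<tau>)"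
      using nbhd[OF K p, of t] t by auto
    have "f t = f u" if u: "u \<in> {0<..<1}" "dist u t < d" for u
    proof -
      obtain \<tau> where \<tau>: "\<tau> \<in> K" "\<pi> u \<in> rel_interior \<tau>" "\<pi> t \<in> \<tau>" using d u by auto
      have A1: "\<pi> u \<in> A" "\<pi> t \<in> A" using u t inA by blast+
      show ?thesis
      proof
        assume "f t"
        have "simplicial_path K (linepath (\<pi> t) (\<pi> u)) \<and> linepath (\<pi> t) (\<pi> u) ` {0<..<1} \<subseteq> A"
          using seg_fwd[OF K C \<tau>(1,3,2) A1(1)] .
        then show "f u" using reach_ext[of K A "\<pi> 0" "\<pi> t" "linepath (\<pi> t) (\<pi> u)"] \<open>f t\<close> A1
          unfolding f_def by (auto simp: linepath_0' linepath_1')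
      next
        assume "f u"
        have "simplicial_path K (linepath (\<pi> u) (\<pi> t)) \<and> linepath (\<pi> u) (\<pi> t) ` {0<..<1} \<subseteq> A"
          using seg_bwd[OF K C \<tau>(1,3,2) A1(1)] .
        then show "f t" using reach_ext[of K A "\<pi> 0" "\<pi> u" "linepath (\<pi> u) (\<pi> t)"] \<open>f u\<close> A1
          unfolding f_def by (auto simp: linepath_0' linepath_1')
      qed
    qed
    then show "eventually (\<lambda>u. f t = f u) (at t within {0<..<1})"
      unfolding eventually_at using d(1) by blast
  qed
  have all: "\<forall>t\<in>{0<..<1}. f t"
  proof
    fix t :: real assume t: "t \<in> {0<..<1}"
    obtain u where u: "u \<in> {0<..<1}" "f u" using start by blast
    have "f u = f t" by (rule connected_local_const[OF _ u(1) t loc]) simp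
    then show "f t" using u by simp
  qed
  obtain d where d: "d > 0" "\<forall>u\<in>{0..1}. dist u 1 < d \<longrightarrow> (\<exists>\<tau>\<in>K. \<pi> u \<in> rel_interior \<tau> \<and> \<pi> 1 \<in> \<tau>)"
    using nbhd[OF K p, of 1] by auto
  define u where "u = max (1 - d/2) (1/2)"
  have u: "u \<in> {0<..<1}" "dist u 1 < d" using d unfolding u_def by (auto simp: dist_real_def)
  then obtain \<tau> where \<tau>: "\<tau> \<in> K" "\<pi> u \<in> rel_interior \<tau>" "\<pi> 1 \<in> \<tau>" using d by auto
  have A1: "\<pi> u \<in> A" using u inA by blast
  have "simplicial_path K (linepath (\<pi> u) (\<pi> 1)) \<and> linepath (\<pi> u) (\<pi> 1) ` {0<..<1} \<subseteq> A"
    using seg_bwd[OF K C \<tau>(1,3,2) A1] .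
  then show ?thesis using reach_ext[of K A "\<pi> 0" "\<pi> u" "linepath (\<pi> u) (\<pi> 1)"] all u A1
    unfolding f_def by (auto simp: linepath_0' linepath_1')
qed

lemma bis_sub: "simplicial_bisimulation K Val R \<Longrightarrow> (x, y) \<in> R \<Longrightarrow> x \<in> polyhedron K \<and> y \<in> polyhedron K"
  unfolding simplicial_bisimulation_def by blast

lemma bis_val: "simplicial_bisimulation K Val R \<Longrightarrow> (x, y) \<in> R \<Longrightarrow> (x \<in> Val p \<longleftrightarrow> y \<in> Val p)"
  unfolding simplicial_bisimulation_def by fast

lemma bis_fw: "simplicial_bisimulation K Val R \<Longrightarrow> (x, y) \<in> R \<Longrightarrow>
   \<forall>\<pi>x. simplicial_path K \<pi>x \<and> \<pi>x 0 = x \<longrightarrow>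
           (\<exists>\<pi>y. simplicial_path K \<pi>y \<and> \<pi>y 0 = y \<and> path_rel R \<pi>x \<pi>y)"
  unfolding simplicial_bisimulation_def by fast

lemma bis_bw: "simplicial_bisimulation K Val R \<Longrightarrow> (x, y) \<in> R \<Longrightarrow>
   \<forall>\<pi>y. simplicial_path K \<pi>y \<and> \<pi>y 0 = y \<longrightarrow>
           (\<exists>\<pi>x. simplicial_path K \<pi>x \<and> \<pi>x 0 = x \<and> path_rel R \<pi>x \<pi>y)"
  unfolding simplicial_bisimulation_def by fast

lemma int_char:
  "y \<in> (top_of_set P) interior_of A \<longleftrightarrow> y \<in> P \<and> (\<exists>e>0. \<forall>z\<in>P. dist z y < e \<longrightarrow> z \<in> A)"
proof
  assume "y \<in> (top_of_set P) interior_of A"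
  then obtain T where T: "openin (top_of_set P) T" "y \<in> T" "T \<subseteq> A"
    unfolding interior_of_def by blast
  then have "T \<subseteq> P" "\<exists>e>0. \<forall>x'\<in>P. dist x' y < e \<longrightarrow> x' \<in> T"
    unfolding openin_euclidean_subtopology_iff by blast+
  then show "y \<in> P \<and> (\<exists>e>0. \<forall>z\<in>P. dist z y < e \<longrightarrow> z \<in> A)" using T by blast
next
  assume a: "y \<in> P \<and> (\<exists>e>0. \<forall>z\<in>P. dist z y < e \<longrightarrow> z \<in> A)"
  then obtain e where e: "e > 0" "\<forall>z\<in>P. dist z y < e \<longrightarrow> z \<in> A" by blast
  have "openin (top_of_set P) (P \<inter> ball y e)" by (intro openin_open_Int) auto
  moreover have "y \<in> P \<inter> ball y e" using a e by simp
  moreover have "P \<inter> ball y e \<subseteq> A" using e by (auto simp: dist_commute)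
  ultimately show "y \<in> (top_of_set P) interior_of A" unfolding interior_of_def by blast
qed

lemma box_dir:
  assumes K: "simplicial_complex K" and C: "cellular K A"
    and yP: "y \<in> polyhedron K"
    and inv: "\<forall>u v. (u, v) \<in> Q \<longrightarrow> (u \<in> A \<longleftrightarrow> v \<in> A)"
    and tr: "\<forall>\<pi>. simplicial_path K \<pi> \<and> \<pi> 0 = y \<longrightarrow>
               (\<exists>\<pi>'. simplicial_path K \<pi>' \<and> \<pi>' 0 = x \<and> (\<forall>t\<in>{0..1}. (\<pi>' t, \<pi> t) \<in> Q))"
    and xi: "x \<in> (top_of_set (polyhedron K)) interior_of A"
  shows "y \<in> (top_of_set (polyhedron K)) interior_of A"
proof -
  obtain e where e: "e > 0" "\<forall>z\<in>polyhedron K. dist z x < e \<longrightarrow> z \<in> A"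
    using xi unfolding int_char by blast
  obtain \<epsilon> where \<epsilon>: "\<epsilon> > 0" "\<forall>z. dist z y < \<epsilon> \<longrightarrow> (\<forall>\<tau>\<in>K. z \<in> \<tau> \<longrightarrow> y \<in> \<tau>)"
    using local_star[OF K] by blast
  have "\<forall>z\<in>polyhedron K. dist z y < \<epsilon> \<longrightarrow> z \<in> A"
  proof (intro ballI impI)
    fix z assume z: "z \<in> polyhedron K" "dist z y < \<epsilon>"
    show "z \<in> A"
    proof (rule ccontr)
      assume zA: "z \<notin> A"
      obtain \<tau> where \<tau>: "\<tau> \<in> K" "z \<in> rel_interior \<tau>" using cover[OF K z(1)] by blast
      have "z \<in> \<tau>" using \<tau> rel_interior_subset by blast
      then have y\<tau>: "y \<in> \<tau>" using \<epsilon>(2) z(2) \<tau>(1) by blast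
      have s: "is_simplex \<tau>" using K \<tau> sc_simplex by blast
      have ins: "\<forall>t\<in>{0<..1}. linepath y z t \<in> rel_interior \<tau>"
        using seg_in1[OF s y\<tau> \<tau>(2)] by auto
      have sp: "simplicial_path K (linepath y z)"
        using simp_seg[OF K \<tau>(1) y\<tau> \<open>z \<in> \<tau>\<close>] ins by auto
      obtain \<pi>' where \<pi>': "simplicial_path K \<pi>'" "\<pi>' 0 = x" "\<forall>t\<in>{0..1}. (\<pi>' t, linepath y z t) \<in> Q"
      proof -
        have "linepath y z 0 = y" by (rule linepath_0')
        then have "simplicial_path K (linepath y z) \<and> linepath y z 0 = y" using sp by simp
        then show ?thesis using tr that by blast
      qed
      have notA: "\<pi>' t \<notin> A" if t: "t \<in> {0<..1}" for t
      proof
        assume "\<pi>' t \<in> A"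
        moreover have "(\<pi>' t, linepath y z t) \<in> Q" using \<pi>'(3) t by auto
        ultimately have "linepath y z t \<in> A" using inv by blast
        moreover have "linepath y z t \<in> rel_interior \<tau>" using ins t by blast
        ultimately have "z \<in> A" using C \<tau> unfolding cellular_def by blast
        then show False using zA by simp
      qed
      have pth: "path \<pi>'" "path_image \<pi>' \<subseteq> polyhedron K"
        using \<pi>'(1) unfolding simplicial_path_def path_in_def by auto
      then have "continuous_on {0..1} \<pi>'" unfolding path_def by simp
      then have "\<forall>x\<in>{0..1}. \<forall>e>0. \<exists>d>0. \<forall>x'\<in>{0..1}. dist x' x < d \<longrightarrow> dist (\<pi>' x') (\<pi>' x) < e"
        unfolding continuous_on_iff .
      then obtain d where d: "d > 0" "\<forall>x'\<in>{0..1}. dist x' 0 < d \<longrightarrow> dist (\<pi>' x') (\<pi>' 0) < e"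
        using e(1) by (meson atLeastAtMost_iff order_refl zero_le_one)
      define t where "t = min (d/2) 1"
      have t: "t \<in> {0<..1}" "dist t 0 < d" using d unfolding t_def by (auto simp: dist_real_def)
      then have "dist (\<pi>' t) x < e" using d \<pi>'(2) by auto
      moreover have "\<pi>' t \<in> polyhedron K" using pth t unfolding path_image_def by auto
      ultimately have "\<pi>' t \<in> A" using e(2) by blast
      then show False using notA t by blast
    qed
  qed
  then show ?thesis unfolding int_char using yP \<epsilon>(1) by blast
qed

lemma gamma_dir:
  assumes K: "simplicial_complex K" and C: "cellular K A"
    and yP: "y \<in> polyhedron K"
    and invA: "\<forall>u v. (u, v) \<in> Q \<longrightarrow> (u \<in> A \<longleftrightarrow> v \<in> A)"
    and invB: "\<forall>u v. (u, v) \<in> Q \<longrightarrow> (u \<in> B \<longleftrightarrow> v \<in> B)"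
    and tr: "\<forall>\<pi>. simplicial_path K \<pi> \<and> \<pi> 0 = x \<longrightarrow>
               (\<exists>\<pi>'. simplicial_path K \<pi>' \<and> \<pi>' 0 = y \<and> (\<forall>t\<in>{0..1}. (\<pi> t, \<pi>' t) \<in> Q))"
    and xg: "\<exists>\<pi>. path_in (polyhedron K) \<pi> \<and> \<pi> 0 = x \<and> \<pi> ` {0<..<1} \<subseteq> A \<and> \<pi> 1 \<in> B"
  shows "\<exists>\<pi>. path_in (polyhedron K) \<pi> \<and> \<pi> 0 = y \<and> \<pi> ` {0<..<1} \<subseteq> A \<and> \<pi> 1 \<in> B"
proof -
  obtain \<pi> where \<pi>: "path_in (polyhedron K) \<pi>" "\<pi> 0 = x" "\<pi> ` {0<..<1} \<subseteq> A" "\<pi> 1 \<in> B"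
    using xg by blast
  have "reach K A (\<pi> 0) (\<pi> 1)"
    using path_to_simplicial[OF K C _ _ \<pi>(3)] \<pi>(1) unfolding path_in_def by blast
  then obtain \<rho> where \<rho>: "simplicial_path K \<rho>" "\<rho> 0 = x" "\<rho> 1 = \<pi> 1" "\<rho> ` {0<..<1} \<subseteq> A"
    unfolding reach_def using \<pi>(2) by blast
  obtain \<rho>' where \<rho>': "simplicial_path K \<rho>'" "\<rho>' 0 = y" "\<forall>t\<in>{0..1}. (\<rho> t, \<rho>' t) \<in> Q"
    using tr \<rho> by blast
  have "\<rho>' ` {0<..<1} \<subseteq> A"
  proof (rule image_subsetI)
    fix t :: real assume t: "t \<in> {0<..<1}"
    then have "\<rho> t \<in> A" "(\<rho> t, \<rho>' t) \<in> Q" using \<rho>(4) \<rho>'(3) by auto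
    then show "\<rho>' t \<in> A" using invA by blast
  qed
  moreover have "\<rho>' 1 \<in> B" using invB \<rho>'(3) \<rho>(3) \<pi>(4) by fastforce
  moreover have "path_in (polyhedron K) \<rho>'" using \<rho>'(1) unfolding simplicial_path_def by blast
  ultimately show ?thesis using \<rho>'(2) by blast
qed

definition R0 :: "'a::euclidean_space set set \<Rightarrow> ('a \<times> 'a) set" where
  "R0 K = {(a, b). \<exists>\<sigma>\<in>K. a \<in> rel_interior \<sigma> \<and> b \<in> rel_interior \<sigma>}"

lemma R0_refl: "simplicial_complex K \<Longrightarrow> z \<in> polyhedron K \<Longrightarrow> (z, z) \<in> R0 K"
  using cover unfolding R0_def by blast

lemma R0_sym: "(a, b) \<in> R0 K \<Longrightarrow> (b, a) \<in> R0 K"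
  unfolding R0_def by blast

lemma R0_path:
  assumes K: "simplicial_complex K" and ab: "(a, b) \<in> R0 K"
    and pa: "simplicial_path K \<pi>a" "\<pi>a 0 = a"
  shows "\<exists>\<pi>b. simplicial_path K \<pi>b \<and> \<pi>b 0 = b \<and> (\<forall>t\<in>{0..1}. (\<pi>a t, \<pi>b t) \<in> R0 K)"
proof -
  obtain \<sigma> where \<sigma>: "\<sigma> \<in> K" "a \<in> rel_interior \<sigma>" "b \<in> rel_interior \<sigma>"
    using ab unfolding R0_def by blast
  obtain s k where S: "s 0 = 0" "s k = 1" "\<forall>i<k. s i < s (Suc i)"
    "\<forall>i<k. \<exists>\<sigma>\<in>K. \<sigma> \<noteq> {} \<and> \<pi>a ` {s i<..<s (Suc i)} \<subseteq> cell \<sigma>"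
    and P: "path_in (polyhedron K) \<pi>a"
    using pa unfolding simplicial_path_def by blast
  have k: "0 < k" using S by (cases k) auto
  obtain \<sigma>0 where \<sigma>0: "\<sigma>0 \<in> K" "\<sigma>0 \<noteq> {}" "\<pi>a ` {s 0<..<s 1} \<subseteq> cell \<sigma>0"
  proof -
    obtain \<sigma>0 where "\<sigma>0 \<in> K" "\<sigma>0 \<noteq> {}" "\<pi>a ` {s 0<..<s (Suc 0)} \<subseteq> cell \<sigma>0"
      using S(4) k by blast
    then show ?thesis using that by (simp add: One_nat_def)
  qed
  have s1: "0 < s 1" using S(1,3) k by force
  have s1le: "s 1 \<le> 1" using mono_s[OF S(3), of 1 k] k S(2) by simp
  have simp0: "is_simplex \<sigma>0" using K \<sigma>0 sc_simplex by blast
  have ce: "cell \<sigma>0 = rel_interior \<sigma>0" using cell_eq[OF simp0] .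
  have cl: "closed \<sigma>0" using simplex_compact[OF simp0] compact_imp_closed by blast
  have cont: "continuous_on {0..1} \<pi>a" using P unfolding path_in_def path_def by simp
  have inr: "\<pi>a t \<in> rel_interior \<sigma>0" if "0 < t" "t < s 1" for t
    using \<sigma>0(3) ce that S(1) by auto
  have "\<pi>a ` closure {0<..<s 1} \<subseteq> \<sigma>0"
  proof (rule image_closure_subset)
    show "continuous_on (closure {0<..<s 1}) \<pi>a"
      using cont s1 s1le by (auto intro: continuous_on_subset)
    show "closed \<sigma>0" by fact
    show "\<pi>a ` {0<..<s 1} \<subseteq> \<sigma>0"
    proof (rule image_subsetI)
      fix t assume "t \<in> {0<..<s 1}"
      then show "\<pi>a t \<in> \<sigma>0" by (meson greaterThanLessThan_iff inr rel_interior_subset subsetD)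
    qed
  qed
  moreover have "0 \<in> closure {0<..<s 1}" using s1 by simp
  ultimately have "\<pi>a 0 \<in> \<sigma>0" by blast
  then have "a \<in> \<sigma>0" using pa(2) by simp
  then have "\<sigma> \<subseteq> \<sigma>0" using star_subset[OF K \<sigma>(1) \<sigma>0(1) \<sigma>(2)] by blast
  then have b0: "b \<in> \<sigma>0" using \<sigma>(3) rel_interior_subset by blast
  define hh where "hh = s 1 / 2"
  have hh: "0 < hh" "hh < s 1" using s1 unfolding hh_def by auto
  have ph: "\<pi>a hh \<in> rel_interior \<sigma>0" using inr hh by simp
  have lin: "linepath b (\<pi>a hh) (t / hh) \<in> rel_interior \<sigma>0" if "0 < t" "t \<le> hh" for t
  proof -
    have "0 < t / hh" "t / hh \<le> 1" using that hh by (auto simp: field_simps)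
    then show ?thesis by (rule seg_in1[OF simp0 b0 ph])
  qed
  define \<pi>b where "\<pi>b = (\<lambda>t. if t \<le> hh then linepath b (\<pi>a hh) (t / hh) else \<pi>a t)"
  have b_0: "\<pi>b 0 = b" unfolding \<pi>b_def using hh by (simp add: linepath_0')
  have contb: "continuous_on {0..1} \<pi>b"
    unfolding \<pi>b_def
  proof (rule continuous_on_cases_le[where h="\<lambda>t. t", simplified])
    show "continuous_on {t \<in> {0..1}. t \<le> hh} (\<lambda>t. linepath b (\<pi>a hh) (t / hh))"
      unfolding linepath_def using hh by (intro continuous_intros) auto
    show "continuous_on {t \<in> {0..1}. hh \<le> t} \<pi>a" using cont by (rule continuous_on_subset) auto
    show "\<And>t. t \<in> {0..1} \<Longrightarrow> t = hh \<Longrightarrow> linepath b (\<pi>a hh) (t / hh) = \<pi>a t"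
      using hh by (simp add: linepath_1')
  qed
  have sub0: "\<sigma>0 \<subseteq> polyhedron K" using \<sigma>0(1) unfolding polyhedron_def by blast
  have imgb: "path_image \<pi>b \<subseteq> polyhedron K"
  proof
    fix z assume "z \<in> path_image \<pi>b"
    then obtain t where t: "t \<in> {0..1}" "z = \<pi>b t" unfolding path_image_def by blast
    consider "t = 0" | "0 < t" "t \<le> hh" | "hh < t" using t by force
    then show "z \<in> polyhedron K"
    proof cases
      case 1 then have "z = b" using t b_0 by simp
      then show ?thesis using b0 sub0 by blast
    next
      case 2 then have "z \<in> rel_interior \<sigma>0" using t lin unfolding \<pi>b_def by simp
      then show ?thesis using sub0 rel_interior_subset by blast
    next
      case 3 then have "z = \<pi>a t" using t unfolding \<pi>b_def by simp
      then show ?thesis using P t unfolding path_in_def path_image_def by blast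
    qed
  qed
  have rel: "\<forall>t\<in>{0..1}. (\<pi>a t, \<pi>b t) \<in> R0 K"
  proof
    fix t :: real assume t: "t \<in> {0..1}"
    consider "t = 0" | "0 < t" "t \<le> hh" | "hh < t" using t by force
    then show "(\<pi>a t, \<pi>b t) \<in> R0 K"
    proof cases
      case 1 then show ?thesis using ab b_0 pa(2) by simp
    next
      case 2
      then have "\<pi>b t = linepath b (\<pi>a hh) (t / hh)" unfolding \<pi>b_def by simp
      then have "\<pi>b t \<in> rel_interior \<sigma>0" using lin 2 by simp
      moreover have "\<pi>a t \<in> rel_interior \<sigma>0" using inr 2 hh by simp
      ultimately have "\<pi>b t \<in> rel_interior \<sigma>0 \<and> \<pi>a t \<in> rel_interior \<sigma>0" by simp
      then show ?thesis using \<sigma>0(1) unfolding R0_def by blast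
    next
      case 3 then have "\<pi>b t = \<pi>a t" unfolding \<pi>b_def by simp
      moreover have "\<pi>a t \<in> polyhedron K" using P t unfolding path_in_def path_image_def by blast
      ultimately show ?thesis using R0_refl[OF K] by simp
    qed
  qed
  have cells: "\<forall>i<k. \<exists>\<sigma>\<in>K. \<sigma> \<noteq> {} \<and> \<pi>b ` {s i<..<s (Suc i)} \<subseteq> cell \<sigma>"
  proof (intro allI impI)
    fix i assume i: "i < k"
    show "\<exists>\<sigma>\<in>K. \<sigma> \<noteq> {} \<and> \<pi>b ` {s i<..<s (Suc i)} \<subseteq> cell \<sigma>"
    proof (cases "i = 0")
      case True
      have "\<pi>b t \<in> cell \<sigma>0" if t: "t \<in> {s 0<..<s (Suc 0)}" for t
      proof (cases "t \<le> hh")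
        case True
        then have "\<pi>b t = linepath b (\<pi>a hh) (t / hh)" unfolding \<pi>b_def by simp
        moreover have "0 < t" using t S(1) by simp
        ultimately show ?thesis using lin[of t] True ce by simp
      next
        case False
        then have "\<pi>b t = \<pi>a t" unfolding \<pi>b_def by simp
        then show ?thesis using \<sigma>0(3) t by (simp add: image_subset_iff)
      qed
      then have "\<pi>b ` {s 0<..<s (Suc 0)} \<subseteq> cell \<sigma>0" by blast
      then show ?thesis using True \<sigma>0(1,2) by blast
    next
      case False
      obtain \<sigma>i where \<sigma>i: "\<sigma>i \<in> K" "\<sigma>i \<noteq> {}" "\<pi>a ` {s i<..<s (Suc i)} \<subseteq> cell \<sigma>i"
        using S(4) i by blast
      have "s 1 \<le> s i" using mono_s[OF S(3), of 1 i] False i by simp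
      then have "\<pi>b t = \<pi>a t" if "t \<in> {s i<..<s (Suc i)}" for t
      proof -
        have "\<not> t \<le> hh" using that hh \<open>s 1 \<le> s i\<close> by simp
        then show ?thesis unfolding \<pi>b_def by simp
      qed
      then have "\<pi>b ` {s i<..<s (Suc i)} \<subseteq> cell \<sigma>i" using \<sigma>i(3) by (metis image_cong)
      then show ?thesis using \<sigma>i by blast
    qed
  qed
  have "path_in (polyhedron K) \<pi>b" unfolding path_in_def path_def using contb imgb by simp
  then have "simplicial_path K \<pi>b"
    unfolding simplicial_path_def using S(1,2,3) cells by blast
  then show ?thesis using b_0 rel by blast
qed

lemma val_cell:
  assumes PM: "polyhedral_model K Val" and "\<sigma> \<in> K" "a \<in> rel_interior \<sigma>" "b \<in> rel_interior \<sigma>" "a \<in> Val p"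
  shows "b \<in> Val p"
proof -
  have K: "simplicial_complex K" using PM unfolding polyhedral_model_def by blast
  obtain S where S: "S \<subseteq> {\<sigma>\<in>K. \<sigma> \<noteq> {}}" "Val p = \<Union>(cell ` S)"
    using PM unfolding polyhedral_model_def by blast
  then obtain \<tau> where \<tau>: "\<tau> \<in> S" "a \<in> cell \<tau>" using assms by blast
  have \<tau>K: "\<tau> \<in> K" using \<tau> S by blast
  then have "cell \<tau> = rel_interior \<tau>" using K sc_simplex cell_eq by blast
  then have "\<tau> = \<sigma>" using cells_disjoint[OF K \<tau>K assms(2) _ assms(3)] \<tau> by blast
  then have "b \<in> cell \<tau>" using \<open>cell \<tau> = rel_interior \<tau>\<close> assms by simp
  then show ?thesis using S \<tau> by blast
qed

lemma R0_bisim: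
  assumes PM: "polyhedral_model K Val"
  shows "simplicial_bisimulation K Val (R0 K)"
proof -
  have K: "simplicial_complex K" using PM unfolding polyhedral_model_def by blast
  have sub: "R0 K \<subseteq> polyhedron K \<times> polyhedron K"
    unfolding R0_def polyhedron_def using rel_interior_subset by blast
  have "(\<forall>p. x \<in> Val p \<longleftrightarrow> y \<in> Val p) \<and>
        (\<forall>\<pi>x. simplicial_path K \<pi>x \<and> \<pi>x 0 = x \<longrightarrow>
           (\<exists>\<pi>y. simplicial_path K \<pi>y \<and> \<pi>y 0 = y \<and> path_rel (R0 K) \<pi>x \<pi>y)) \<and>
        (\<forall>\<pi>y. simplicial_path K \<pi>y \<and> \<pi>y 0 = y \<longrightarrow>
           (\<exists>\<pi>x. simplicial_path K \<pi>x \<and> \<pi>x 0 = x \<and> path_rel (R0 K) \<pi>x \<pi>y))"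
    if xy: "(x, y) \<in> R0 K" for x y
  proof (intro conjI allI impI)
    obtain \<sigma> where \<sigma>: "\<sigma> \<in> K" "x \<in> rel_interior \<sigma>" "y \<in> rel_interior \<sigma>"
      using xy unfolding R0_def by blast
    fix p show "x \<in> Val p \<longleftrightarrow> y \<in> Val p"
      using val_cell[OF PM \<sigma>(1,2,3)] val_cell[OF PM \<sigma>(1,3,2)] by blast
  next
    fix \<pi>x assume "simplicial_path K \<pi>x \<and> \<pi>x 0 = x"
    then show "\<exists>\<pi>y. simplicial_path K \<pi>y \<and> \<pi>y 0 = y \<and> path_rel (R0 K) \<pi>x \<pi>y"
      using R0_path[OF K xy] unfolding path_rel_def by blast
  next
    fix \<pi>y assume "simplicial_path K \<pi>y \<and> \<pi>y 0 = y"
    then obtain \<pi>x where "simplicial_path K \<pi>x" "\<pi>x 0 = x" "\<forall>t\<in>{0..1}. (\<pi>y t, \<pi>x t) \<in> R0 K"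
      using R0_path[OF K R0_sym[OF xy]] by blast
    then show "\<exists>\<pi>x. simplicial_path K \<pi>x \<and> \<pi>x 0 = x \<and> path_rel (R0 K) \<pi>x \<pi>y"
      unfolding path_rel_def using R0_sym by blast
  qed
  then show ?thesis unfolding simplicial_bisimulation_def using sub by blast
qed

lemma sem_sub: "sem K Val \<phi> \<subseteq> polyhedron K"
proof (induction \<phi>)
  case (Box \<phi>)
  then show ?case using interior_of_subset[of "top_of_set (polyhedron K)" "sem K Val \<phi>"] by simp
qed auto

lemma main_ind:
  assumes PM: "polyhedral_model K Val"
  shows "\<And>R x y. simplicial_bisimulation K Val R \<Longrightarrow> (x, y) \<in> R \<Longrightarrow>
           (x \<in> sem K Val \<phi> \<longleftrightarrow> y \<in> sem K Val \<phi>)"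
proof (induction \<phi>)
  case Top then show ?case using bis_sub[OF Top.prems] by simp
next
  case (Atom p) then show ?case using bis_sub[OF Atom.prems] bis_val[OF Atom.prems] by simp
next
  case (Not \<phi>) then show ?case using bis_sub[OF Not.prems] Not.IH[OF Not.prems] by simp
next
  case (And \<phi> \<psi>) then show ?case using And.IH(1)[OF And.prems] And.IH(2)[OF And.prems] by simp
next
  case (Box \<phi>)
  have K: "simplicial_complex K" using PM unfolding polyhedral_model_def by blast
  have C: "cellular K (sem K Val \<phi>)"
    unfolding cellular_def
  proof (intro ballI impI)
    fix \<sigma> a b assume "\<sigma> \<in> K" "a \<in> rel_interior \<sigma>" "b \<in> rel_interior \<sigma>" "a \<in> sem K Val \<phi>"
    moreover have "(a, b) \<in> R0 K" using calculation unfolding R0_def by blast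
    ultimately show "b \<in> sem K Val \<phi>" using Box.IH[OF R0_bisim[OF PM]] by blast
  qed
  have xyP: "x \<in> polyhedron K" "y \<in> polyhedron K" using bis_sub[OF Box.prems] by auto
  have inv: "\<forall>u v. (u, v) \<in> R \<longrightarrow> (u \<in> sem K Val \<phi> \<longleftrightarrow> v \<in> sem K Val \<phi>)"
    using Box.IH[OF Box.prems(1)] by blast
  have inv': "\<forall>u v. (u, v) \<in> R\<inverse> \<longrightarrow> (u \<in> sem K Val \<phi> \<longleftrightarrow> v \<in> sem K Val \<phi>)"
    using inv by blast
  have tr: "\<forall>\<pi>. simplicial_path K \<pi> \<and> \<pi> 0 = y \<longrightarrow>
               (\<exists>\<pi>'. simplicial_path K \<pi>' \<and> \<pi>' 0 = x \<and> (\<forall>t\<in>{0..1}. (\<pi>' t, \<pi> t) \<in> R))"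
    using bis_bw[OF Box.prems] unfolding path_rel_def by blast
  have tr': "\<forall>\<pi>. simplicial_path K \<pi> \<and> \<pi> 0 = x \<longrightarrow>
               (\<exists>\<pi>'. simplicial_path K \<pi>' \<and> \<pi>' 0 = y \<and> (\<forall>t\<in>{0..1}. (\<pi>' t, \<pi> t) \<in> R\<inverse>))"
    using bis_fw[OF Box.prems] unfolding path_rel_def by blast
  show ?case unfolding sem.simps
    using box_dir[OF K C xyP(2) inv tr] box_dir[OF K C xyP(1) inv' tr'] by argo
next
  case (Gamma \<phi> \<psi>)
  have K: "simplicial_complex K" using PM unfolding polyhedral_model_def by blast
  have C: "cellular K (sem K Val \<phi>)"
    unfolding cellular_def
  proof (intro ballI impI)
    fix \<sigma> a b assume "\<sigma> \<in> K" "a \<in> rel_interior \<sigma>" "b \<in> rel_interior \<sigma>" "a \<in> sem K Val \<phi>"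
    moreover have "(a, b) \<in> R0 K" using calculation unfolding R0_def by blast
    ultimately show "b \<in> sem K Val \<phi>" using Gamma.IH(1)[OF R0_bisim[OF PM]] by blast
  qed
  have xyP: "x \<in> polyhedron K" "y \<in> polyhedron K" using bis_sub[OF Gamma.prems] by auto
  have invA: "\<forall>u v. (u, v) \<in> R \<longrightarrow> (u \<in> sem K Val \<phi> \<longleftrightarrow> v \<in> sem K Val \<phi>)"
    using Gamma.IH(1)[OF Gamma.prems(1)] by blast
  have invB: "\<forall>u v. (u, v) \<in> R \<longrightarrow> (u \<in> sem K Val \<psi> \<longleftrightarrow> v \<in> sem K Val \<psi>)"
    using Gamma.IH(2)[OF Gamma.prems(1)] by blast
  have invA': "\<forall>u v. (u, v) \<in> R\<inverse> \<longrightarrow> (u \<in> sem K Val \<phi> \<longleftrightarrow> v \<in> sem K Val \<phi>)"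
    using invA by blast
  have invB': "\<forall>u v. (u, v) \<in> R\<inverse> \<longrightarrow> (u \<in> sem K Val \<psi> \<longleftrightarrow> v \<in> sem K Val \<psi>)"
    using invB by blast
  have tr: "\<forall>\<pi>. simplicial_path K \<pi> \<and> \<pi> 0 = x \<longrightarrow>
               (\<exists>\<pi>'. simplicial_path K \<pi>' \<and> \<pi>' 0 = y \<and> (\<forall>t\<in>{0..1}. (\<pi> t, \<pi>' t) \<in> R))"
    using bis_fw[OF Gamma.prems] unfolding path_rel_def by blast
  have tr': "\<forall>\<pi>. simplicial_path K \<pi> \<and> \<pi> 0 = y \<longrightarrow>
               (\<exists>\<pi>'. simplicial_path K \<pi>' \<and> \<pi>' 0 = x \<and> (\<forall>t\<in>{0..1}. (\<pi> t, \<pi>' t) \<in> R\<inverse>))"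
    using bis_bw[OF Gamma.prems] unfolding path_rel_def by blast
  show ?case unfolding sem.simps mem_Collect_eq
    using gamma_dir[OF K C xyP(2) invA invB tr] gamma_dir[OF K C xyP(1) invA' invB' tr'] xyP
    by argo
qed

theorem mainTheorem14:
  fixes K :: "'a::euclidean_space set set"
    and Val :: "'p::finite \<Rightarrow> 'a set"
    and R :: "('a \<times> 'a) set"
  assumes "polyhedral_model K Val"
    and "simplicial_bisimulation K Val R"
    and "(x, y) \<in> R"
  shows "\<forall>\<phi>. models K Val x \<phi> \<longleftrightarrow> models K Val y \<phi>"
  unfolding models_def using main_ind[OF assms(1) assms(2,3)] by blast

end
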